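(* Let $\beta>0$, $\tilde\lambda\in(0,1]$, $\mathcal{L}\ge 0$, $x\ge 0$, $y\le 0$, $z\ge 0$, $r>0$. For $\Delta>y$ let $p^D(\Delta)=\frac{x}{\Delta-y}$. Suppose the set $F$ of $\Delta>y$ with $\beta(\mathcal{L}+\Delta)\le\tilde\lambda\big(z+\Delta p^D(\Delta)\big)$ is nonempty, and write $F=[\Delta_{\min},\Delta_{\max}]\cap(y,\infty)$, where $\Delta_{\min}\le\Delta_{\max}$ are the real roots of $-\beta \Delta^2 + \Delta( \tilde \lambda (z+x) - \beta(\mathcal{L} - y)) - \tilde\lambda zy + \beta\mathcal{L} y$. Consider the problem $$\max_{\Delta\in F}\; r\Big(z+\Delta\frac{x}{\Delta-y}\Big)-\mathcal{L}-\Delta ,$$ equivalently maximizing $f(\Delta)=r\Delta\frac{x}{\Delta-y}-\Delta$ over $F$. Let $\Delta^*=y+\sqrt{-yrx}$. Then the solution of this problem is $\Delta^*$ if $\Delta^*\in F$; it is $\Delta_{\min}$ if $\Delta^*<\Delta_{\min}$; and it is $\Delta_{\max}$ if $\Delta^*>\Delta_{\max}$.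
   Context: Single period $t$ of a stablecoin market model. A speculator owes $\mathcal{L}=\mathcal{L}_{t-1}$ stablecoins and holds Ether worth $z$ dollars; $x\ge0$ is new dollar stablecoin demand and $y\le0$ (with $|y|$ the free stablecoin supply). The speculator chooses a change $\Delta$ in stablecoin supply; for $\Delta>y$ the market clears at price $p^D(\Delta)=x/(\Delta-y)$. The speculator maximizes expected equity $r(z+\Delta p^D(\Delta))-(\mathcal{L}+\Delta)$, where $r$ is its expected multiplicative Ether return, subject to the leverage constraint $\beta(\mathcal{L}+\Delta)\le\tilde\lambda(z+\Delta p^D(\Delta))$ with liquidation threshold $\beta$ and leverage bound $\tilde\lambda$. *)

theory Defs
  imports Complex_Main
begin

definition pD :: "real \<Rightarrow> real \<Rightarrow> real \<Rightarrow> real" where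
  "pD x y d = x / (d - y)"

definition feasible :: "real \<Rightarrow> real \<Rightarrow> real \<Rightarrow> real \<Rightarrow> real \<Rightarrow> real \<Rightarrow> real set" where
  "feasible \<beta> lam L x y z = {d. d > y \<and> \<beta> * (L + d) \<le> lam * (z + d * pD x y d)}"

definition objective :: "real \<Rightarrow> real \<Rightarrow> real \<Rightarrow> real \<Rightarrow> real \<Rightarrow> real \<Rightarrow> real" where
  "objective r L x y z d = r * (z + d * pD x y d) - L - d"

definition constr_quad :: "real \<Rightarrow> real \<Rightarrow> real \<Rightarrow> real \<Rightarrow> real \<Rightarrow> real \<Rightarrow> real \<Rightarrow> real" where
  "constr_quad \<beta> lam L x y z d =
     - \<beta> * d\<^sup>2 + d * (lam * (z + x) - \<beta> * (L - y)) - lam * z * y + \<beta> * L * y"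

end

theory Submission
  imports Defs
begin

lemma quad_factor:
  fixes \<beta> B C a b :: real
  assumes b0: "\<beta> > 0" and le: "a \<le> b"
    and roots: "\<forall>d. - \<beta> * d\<^sup>2 + B * d + C = 0 \<longleftrightarrow> (d = a \<or> d = b)"
  shows "- \<beta> * d\<^sup>2 + B * d + C = - \<beta> * (d - a) * (d - b)"
proof -
  define e where "e = B / \<beta> - a"
  have qa: "- \<beta> * a\<^sup>2 + B * a + C = 0" using roots by blast
  have Be: "B = \<beta> * (e + a)" using b0 unfolding e_def by (simp add: field_simps)
  have Ce: "C = \<beta> * a\<^sup>2 - B * a" using qa by simp
  have id: "\<And>d. - \<beta> * d\<^sup>2 + B * d + C = - \<beta> * (d - a) * (d - e)"
    unfolding Ce Be by (simp add: power2_eq_square algebra_simps)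
  have "- \<beta> * e\<^sup>2 + B * e + C = 0" using id[of e] by simp
  hence "e = a \<or> e = b" using roots by blast
  moreover have "e = a \<Longrightarrow> a = b"
  proof -
    assume ea: "e = a"
    have "- \<beta> * b\<^sup>2 + B * b + C = 0" using roots by blast
    hence "\<beta> * (b - a) * (b - a) = 0" using id[of b] ea by simp
    thus "a = b" using b0 by simp
  qed
  ultimately have "e = b" by auto
  thus ?thesis using id by simp
qed

lemma obj_diff:
  fixes r x y z L t u :: real
  assumes "t > 0" "u > 0"
  shows "objective r L x y z (y + t) - objective r L x y z (y + u)
         = (t - u) * ((- y * r * x) - t * u) / (t * u)"
  using assms unfolding objective_def pD_def
  by (simp add: field_simps)

theorem proposition3p2:
  fixes \<beta> lam L x y z r dmin dmax :: real
  assumes "\<beta> > 0" and "0 < lam" and "lam \<le> 1" and "L \<ge> 0" and "x \<ge> 0"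
    and "y \<le> 0" and "z \<ge> 0" and "r > 0"
    and "feasible \<beta> lam L x y z \<noteq> {}"
    and "dmin \<le> dmax"
    and "\<forall>d. constr_quad \<beta> lam L x y z d = 0 \<longleftrightarrow> (d = dmin \<or> d = dmax)"
  defines "dstar \<equiv> y + sqrt (- y * r * x)"
  defines "Sol \<equiv> {d. is_arg_max (objective r L x y z) (\<lambda>d. d \<in> feasible \<beta> lam L x y z) d}"
  shows "(dstar \<in> feasible \<beta> lam L x y z \<longrightarrow> Sol = {dstar})
       \<and> (dstar < dmin \<longrightarrow> Sol = {dmin})
       \<and> (dstar > dmax \<longrightarrow> Sol = {dmax})"
proof -
  define F where "F = feasible \<beta> lam L x y z"
  define f where "f = objective r L x y z"
  define a where "a = - y * r * x"
  define s where "s = sqrt a"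
  have a0: "a \<ge> 0" unfolding a_def using assms(5,6,8)
    by (simp add: mult_nonneg_nonneg mult_nonpos_nonneg)
  have s0: "s \<ge> 0" and ss: "s * s = a" unfolding s_def using a0 by auto
  have ds: "dstar = y + s" unfolding dstar_def s_def a_def by simp
  have qf: "\<And>d. constr_quad \<beta> lam L x y z d = - \<beta> * (d - dmin) * (d - dmax)"
  proof -
    fix d
    have r: "\<forall>d. - \<beta> * d\<^sup>2 + (lam * (z + x) - \<beta> * (L - y)) * d + (- lam * z * y + \<beta> * L * y) = 0
             \<longleftrightarrow> (d = dmin \<or> d = dmax)"
      using assms(11) unfolding constr_quad_def by (simp add: algebra_simps)
    show "constr_quad \<beta> lam L x y z d = - \<beta> * (d - dmin) * (d - dmax)"
      using quad_factor[OF assms(1) assms(10) r, of d] unfolding constr_quad_def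
      by (simp add: algebra_simps)
  qed
  have Fchar: "\<And>d. d \<in> F \<longleftrightarrow> d > y \<and> dmin \<le> d \<and> d \<le> dmax"
  proof -
    fix d
    show "d \<in> F \<longleftrightarrow> d > y \<and> dmin \<le> d \<and> d \<le> dmax"
    proof (cases "d > y")
      case True
      have "\<beta> * (L + d) \<le> lam * (z + d * pD x y d) \<longleftrightarrow> constr_quad \<beta> lam L x y z d \<ge> 0"
      proof -
        have "lam * (z + d * pD x y d) = lam * (z * (d - y) + d * x) / (d - y)"
          using True unfolding pD_def by (simp add: field_simps)
        hence "\<beta> * (L + d) \<le> lam * (z + d * pD x y d) \<longleftrightarrow>
               \<beta> * (L + d) * (d - y) \<le> lam * (z * (d - y) + d * x)"
          using True by (simp add: pos_le_divide_eq)
        also have "\<dots> \<longleftrightarrow> constr_quad \<beta> lam L x y z d \<ge> 0"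
          unfolding constr_quad_def by (simp add: power2_eq_square algebra_simps)
        finally show ?thesis .
      qed
      also have "\<dots> \<longleftrightarrow> (d - dmin) * (d - dmax) \<le> 0"
        unfolding qf using assms(1)
        by (metis mult_minus_left mult.assoc neg_0_le_iff_le zero_le_mult_iff mult_le_0_iff
            linorder_not_le order_less_imp_le)
      also have "\<dots> \<longleftrightarrow> dmin \<le> d \<and> d \<le> dmax"
        using assms(10) by (auto simp: mult_le_0_iff)
      finally show ?thesis using True unfolding F_def feasible_def by auto
    next
      case False
      then show ?thesis unfolding F_def feasible_def by auto
    qed
  qed
  have diff: "\<And>d e. d > y \<Longrightarrow> e > y \<Longrightarrow> f d - f e = ((d - y) - (e - y)) * (a - (d - y) * (e - y)) / ((d - y) * (e - y))"
    unfolding f_def a_def using obj_diff by (metis add.commute diff_add_cancel diff_gt_0_iff_gt)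
  have inc: "\<And>d e. y < d \<Longrightarrow> d < e \<Longrightarrow> e \<le> dstar \<Longrightarrow> f d < f e"
  proof -
    fix d e assume h: "y < d" "d < e" "e \<le> dstar"
    have "(d - y) * (e - y) < s * s"
      using h ds s0 by (intro mult_less_le_imp_less) auto
    hence "(e - y) * (d - y) < a" using ss by (simp add: mult.commute)
    moreover have "f e - f d = ((e - y) - (d - y)) * (a - (e - y) * (d - y)) / ((e - y) * (d - y))"
      using diff h by auto
    moreover have "((e - y) - (d - y)) * (a - (e - y) * (d - y)) / ((e - y) * (d - y)) > 0"
      using h by (intro divide_pos_pos mult_pos_pos) (auto simp: calculation)
    ultimately show "f d < f e" by linarith
  qed
  have dec: "\<And>d e. dstar \<le> d \<Longrightarrow> d < e \<Longrightarrow> y < d \<Longrightarrow> f e < f d"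
  proof -
    fix d e assume h: "dstar \<le> d" "d < e" "y < d"
    have "s * s < (e - y) * (d - y)"
    proof (cases "s = 0")
      case True thus ?thesis using h by simp
    next
      case False
      thus ?thesis using h ds s0 by (intro mult_less_le_imp_less) auto
    qed
    hence "a < (e - y) * (d - y)" using ss by simp
    moreover have "f e - f d = ((e - y) - (d - y)) * (a - (e - y) * (d - y)) / ((e - y) * (d - y))"
      using diff h by auto
    moreover have "((e - y) - (d - y)) * ((e - y) * (d - y) - a) / ((e - y) * (d - y)) > 0"
      using h calculation(1) by (intro divide_pos_pos mult_pos_pos) auto
    ultimately show "f e < f d"
      by (smt (verit, ccfv_SIG) minus_divide_left mult_minus_right)
  qed
  have uniq: "\<And>m. m \<in> F \<Longrightarrow> (\<And>d. d \<in> F \<Longrightarrow> d \<noteq> m \<Longrightarrow> f d < f m) \<Longrightarrow> Sol = {m}"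
  proof -
    fix m assume mF: "m \<in> F" and st: "\<And>d. d \<in> F \<Longrightarrow> d \<noteq> m \<Longrightarrow> f d < f m"
    show "Sol = {m}"
    proof (intro set_eqI iffI)
      fix d assume "d \<in> Sol"
      hence dF: "d \<in> F" and nm: "\<not> f d < f m"
        using mF unfolding Sol_def is_arg_max_def F_def f_def by auto
      show "d \<in> {m}" using st[OF dF] nm by auto
    next
      fix d assume "d \<in> {m}"
      thus "d \<in> Sol" using mF st unfolding Sol_def is_arg_max_def F_def f_def
        by (auto simp: not_less intro: less_imp_le)
    qed
  qed
  have c1: "dstar \<in> F \<longrightarrow> Sol = {dstar}"
  proof
    assume h: "dstar \<in> F"
    show "Sol = {dstar}"
    proof (rule uniq[OF h])
      fix d assume "d \<in> F" "d \<noteq> dstar"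
      hence "d > y" "d \<noteq> dstar" using Fchar by auto
      thus "f d < f dstar" using inc[of d dstar] dec[of dstar d] h Fchar
        by (cases "d < dstar") auto
    qed
  qed
  have c2: "dstar < dmin \<longrightarrow> Sol = {dmin}"
  proof
    assume h: "dstar < dmin"
    have y: "y \<le> dstar" using ds s0 by simp
    have mF: "dmin \<in> F" using Fchar h y assms(10) by auto
    show "Sol = {dmin}"
    proof (rule uniq[OF mF])
      fix d assume "d \<in> F" "d \<noteq> dmin"
      thus "f d < f dmin" using dec[of dmin d] Fchar h y by force
    qed
  qed
  have c3: "dstar > dmax \<longrightarrow> Sol = {dmax}"
  proof
    assume h: "dstar > dmax"
    obtain d0 where "d0 \<in> F" using assms(9) unfolding F_def by auto
    hence mF: "dmax \<in> F" using Fchar by force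
    show "Sol = {dmax}"
    proof (rule uniq[OF mF])
      fix d assume "d \<in> F" "d \<noteq> dmax"
      thus "f d < f dmax" using inc[of d dmax] Fchar h by force
    qed
  qed
  show ?thesis using c1 c2 c3 unfolding F_def by blast
qed

end
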